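(* Let $n\ge7$ and let $p$ be an odd prime with $p+3\le n$. In the symmetric group $\mathfrak S_n$ put $a=(1,p+2,p+1)(2,p+3)$ and $c=(1,2,\dots,p)(p+1,p+2,\dots,n)$. Then: (1) there is no automorphism $\varphi$ of $\mathfrak S_n$ with $\varphi(a)=a^{-1}$ and $\varphi(c)=c^{-1}$; (2) $\mathfrak S_n=\langle a,c\rangle$. *)

theory Defs
  imports "HOL-Algebra.Sym_Groups" "HOL-Algebra.Generated_Groups" "HOL-Computational_Algebra.Primes"
begin

definition perm_a :: "nat \<Rightarrow> (nat \<Rightarrow> nat)" where
  "perm_a p = cycle_of_list [1, p+2, p+1] \<circ> cycle_of_list [2, p+3]"

definition perm_c :: "nat \<Rightarrow> nat \<Rightarrow> (nat \<Rightarrow> nat)" where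
  "perm_c n p = cycle_of_list [1..<p+1] \<circ> cycle_of_list [p+1..<n+1]"

end

theory Submission
  imports Defs
begin


lemma cyc_upt: "a < b \<Longrightarrow> cycle_of_list [a..<b] x = (if a \<le> x \<and> x+1 < b then x+1 else if x+1 = b then a else x)"
proof (induction "b - a - 1" arbitrary: a x)
  case 0
  then have "b = a+1" by simp
  then show ?case by auto
next
  case (Suc k)
  then have b: "[a..<b] = a # (a+1) # [a+2..<b]" by (simp add: upt_rec)
  have "[a+1..<b] = (a+1) # [a+2..<b]" using Suc by (simp add: upt_rec)
  then have e: "cycle_of_list [a..<b] = transpose a (a+1) \<circ> cycle_of_list [a+1..<b]"
    using b by simp
  have ih: "cycle_of_list [a+1..<b] y = (if a+1 \<le> y \<and> y+1 < b then y+1 else if y+1 = b then a+1 else y)" for y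
    using Suc(1)[of "a+1"] Suc(2) by (auto simp del: upt_Suc)
  show ?case unfolding e comp_def ih using Suc(2,3) by (auto simp: transpose_def simp del: upt_Suc)
qed

lemma A_apply: "p \<ge> 3 \<Longrightarrow> perm_a p x = (if x = 1 then p+2 else if x = p+2 then p+1 else if x = p+1 then 1
   else if x = 2 then p+3 else if x = p+3 then 2 else x)"
  unfolding perm_a_def by (auto simp: transpose_def)

lemma C_apply: "p \<ge> 1 \<Longrightarrow> p < n \<Longrightarrow> perm_c n p x = (if 1 \<le> x \<and> x < p then x+1 else if x = p then 1
   else if p < x \<and> x < n then x+1 else if x = n then p+1 else x)"
  unfolding perm_c_def comp_def
  by (simp add: cyc_upt del: upt_Suc)



lemma conj_transpose: "bij g \<Longrightarrow> g \<circ> transpose i j \<circ> inv' g = transpose (g i) (g j)"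
proof -
  assume b: "bij g"
  have "transpose (g i) (g j) \<circ> g = g \<circ> transpose i j"
    using transpose_comp_eq[OF b, of "g i" "g j"] b by (simp add: bij_is_inj)
  then have "transpose (g i) (g j) \<circ> g \<circ> inv' g = g \<circ> transpose i j \<circ> inv' g" by simp
  moreover have "g \<circ> inv' g = id" using b bij_is_surj surj_iff by blast
  ultimately show ?thesis by (simp add: comp_assoc)
qed

lemma A_perm: "p \<ge> 3 \<Longrightarrow> p + 3 \<le> n \<Longrightarrow> perm_a p permutes {1..n}"
proof -
  assume "p \<ge> 3" "p + 3 \<le> n"
  then have "cycle_of_list [1, p+2, p+1] permutes {1..n}" "cycle_of_list [2, p+3] permutes {1..n}"
    by (intro permutes_subset[OF cycle_permutes]; auto)+
  then show ?thesis unfolding perm_a_def by (rule permutes_compose[rotated])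
qed

lemma C_perm: "p \<ge> 3 \<Longrightarrow> p + 3 \<le> n \<Longrightarrow> perm_c n p permutes {1..n}"
proof -
  assume "p \<ge> 3" "p + 3 \<le> n"
  then have "cycle_of_list [1..<p+1] permutes {1..n}" "cycle_of_list [p+1..<n+1] permutes {1..n}"
    by (auto intro!: permutes_subset[OF cycle_permutes])
  then show ?thesis unfolding perm_c_def by (rule permutes_compose[rotated])
qed



lemma part2:
  assumes p3: "p \<ge> 3" and pn: "p + 3 \<le> n"
  shows "generate (sym_group n) {perm_a p, perm_c n p} = carrier (sym_group n)"
proof -
  let ?G = "sym_group n"
  let ?A = "perm_a p" and ?C = "perm_c n p"
  define H where "H = generate ?G {?A, ?C}"
  interpret group ?G by (rule sym_group_is_group)
  have Ac: "?A \<in> carrier ?G" using A_perm[OF p3 pn] by (simp add: sym_group_carrier)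
  have Cc: "?C \<in> carrier ?G" using C_perm[OF p3 pn] by (simp add: sym_group_carrier)
  have sub: "subgroup H ?G" unfolding H_def using Ac Cc by (intro generate_is_subgroup) auto
  have AH: "?A \<in> H" and CH: "?C \<in> H" unfolding H_def by (auto intro: generate.incl)
  have mul: "f \<circ> g \<in> H" if "f \<in> H" "g \<in> H" for f g
    using subgroup.m_closed[OF sub that] by (simp add: sym_group_mult)
  have Hc: "f \<in> H \<Longrightarrow> f permutes {1..n}" for f
    using subgroup.subset[OF sub] by (auto simp: sym_group_carrier)
  have invH: "inv' f \<in> H" if "f \<in> H" for f
    using subgroup.m_inv_closed[OF sub that] subgroup.subset[OF sub] that by auto
  have conj: "transpose (g i) (g j) \<in> H" if "g \<in> H" "transpose i j \<in> H" for g i j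
  proof -
    have "bij g" using Hc[OF that(1)] by (rule permutes_bij)
    have "g \<circ> transpose i j \<circ> inv' g \<in> H" using that by (intro mul invH)
    then show ?thesis using conj_transpose[OF \<open>bij g\<close>] by simp
  qed
  have trans: "transpose i k \<in> H" if "transpose i j \<in> H" "transpose j k \<in> H" for i j k
  proof (cases "k = i \<or> k = j")
    case True
    then show ?thesis using that subgroup.one_closed[OF sub]
      by (auto simp: sym_group_one)
  next
    case False
    then show ?thesis using conj[OF that(1) that(2)] by (simp add: transpose_def)
  qed
  have sym: "transpose j i \<in> H" if "transpose i j \<in> H" for i j
    using that by (simp add: transpose_commute)
  have Cv: "?C x = (if 1 \<le> x \<and> x < p then x+1 else if x = p then 1
     else if p < x \<and> x < n then x+1 else if x = n then p+1 else x)" for x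
    using C_apply[of p n x] p3 pn by simp
  have Av: "?A x = (if x = 1 then p+2 else if x = p+2 then p+1 else if x = p+1 then 1
     else if x = 2 then p+3 else if x = p+3 then 2 else x)" for x
    using A_apply[of p x] p3 by simp
  have injC: "inj ?C" using C_perm[OF p3 pn] by (rule permutes_inj)
  have A3: "?A \<circ> ?A \<circ> ?A = transpose 2 (p+3)"
    using p3 by (auto simp: fun_eq_iff Av transpose_def)
  have A4: "?A \<circ> ?A \<circ> ?A \<circ> ?A = cycle_of_list [1, p+2, p+1]"
    using p3 by (auto simp: fun_eq_iff Av transpose_def)
  have T: "transpose 2 (p+3) \<in> H" using A3 AH mul by metis
  have S: "cycle_of_list [1, p+2, p+1] \<in> H" using A4 AH mul by metis
  have Ci2: "inv' ?C 2 = 1" by (rule inv_f_eq[OF injC]) (use p3 in \<open>simp add: Cv\<close>)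
  have Ci3: "inv' ?C (p+3) = p+2" by (rule inv_f_eq[OF injC]) (use p3 pn in \<open>simp add: Cv\<close>)
  have R1: "transpose 1 (p+2) \<in> H" using conj[OF invH[OF CH] T] Ci2 Ci3 by simp
  have R2: "transpose (p+2) (p+1) \<in> H" using conj[OF S R1] p3 by (simp add: transpose_def)
  have R3: "transpose 1 (p+1) \<in> H" using trans[OF R1 R2] .
  have C1: "?C 1 = 2" and Cp1: "?C (p+1) = p+2" using p3 pn by (simp_all add: Cv)
  have R4: "transpose 2 (p+2) \<in> H" using conj[OF CH R3] unfolding C1 Cp1 .
  have R12: "transpose 1 2 \<in> H" using trans[OF R1 sym[OF R4]] .
  have adjA: "transpose i (i+1) \<in> H" if "1 \<le> i" "i < p" for i
    using that
  proof (induction i)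
    case 0 then show ?case by simp
  next
    case (Suc i)
    show ?case
    proof (cases "i = 0")
      case True then show ?thesis using R12 by (simp add: numeral_2_eq_2)
    next
      case False
      then have "transpose i (i+1) \<in> H" using Suc by simp
      from conj[OF CH this] show ?thesis using False Suc.prems by (simp add: Cv)
    qed
  qed
  have inA: "transpose 1 i \<in> H" if "1 \<le> i" "i \<le> p" for i
    using that
  proof (induction i)
    case 0 then show ?case by simp
  next
    case (Suc i)
    show ?case
    proof (cases "i = 0")
      case True then show ?thesis using subgroup.one_closed[OF sub] by (simp add: sym_group_one id_def)
    next
      case False
      then show ?thesis using trans[OF Suc.IH adjA[of i]] Suc.prems by simp
    qed
  qed
  have adjB: "transpose (p+1+k) (p+2+k) \<in> H" if "p+1+k < n" for k
    using that
  proof (induction k)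
    case 0 then show ?case using sym[OF R2] by simp
  next
    case (Suc k)
    then have "transpose (p+1+k) (p+2+k) \<in> H" by simp
    from conj[OF CH this] show ?case using Suc.prems by (simp add: Cv)
  qed
  have inB: "transpose (p+1) (p+1+k) \<in> H" if "p+1+k \<le> n" for k
    using that
  proof (induction k)
    case 0 then show ?case using subgroup.one_closed[OF sub] by (simp add: sym_group_one id_def)
  next
    case (Suc k)
    then show ?case using trans[OF Suc.IH adjB[of k]] by simp
  qed
  have all1: "transpose 1 x \<in> H" if "x \<in> {1..n}" for x
  proof (cases "x \<le> p")
    case True then show ?thesis using inA that by simp
  next
    case False
    then obtain k where "x = p+1+k" by (metis add.commute le_add_diff_inverse not_less_eq_eq add_Suc_right plus_1_eq_Suc add.assoc less_or_eq_imp_le)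
    then show ?thesis using trans[OF R3 inB[of k]] that by simp
  qed
  have allT: "transpose x y \<in> H" if "x \<in> {1..n}" "y \<in> {1..n}" for x y
    using trans[OF sym[OF all1[OF that(1)]] all1[OF that(2)]] .
  have swp: "q \<in> H" if "swapidseq_ext S k q" "S \<subseteq> {1..n}" for S k q
    using that
  proof (induction rule: swapidseq_ext.induct)
    case empty then show ?case using subgroup.one_closed[OF sub] by (simp add: sym_group_one id_def)
  next
    case (single S0 k0 q0 a0) then show ?case by simp
  next
    case (comp S0 k0 q0 a0 b0)
    then have "a0 \<in> {1..n}" "b0 \<in> {1..n}" "q0 \<in> H" by auto
    then show ?case using mul[OF allT] by blast
  qed
  show ?thesis
  proof
    show "generate ?G {?A, ?C} \<subseteq> carrier ?G" using subgroup.subset[OF sub] H_def by simp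
    show "carrier ?G \<subseteq> generate ?G {?A, ?C}"
    proof
      fix q assume "q \<in> carrier ?G"
      then have "q permutes {1..n}" by (simp add: sym_group_carrier)
      then obtain k where "swapidseq_ext {1..n} k q" using swapidseq_ext_of_permutation by blast
      then show "q \<in> generate ?G {?A, ?C}" using swp H_def by blast
    qed
  qed
qed



lemma part1:
  assumes p3: "p \<ge> 3" and pn: "p + 3 \<le> n"
  shows "\<not> (\<exists>\<phi> \<in> iso (sym_group n) (sym_group n).
              \<phi> (perm_a p) = inv\<^bsub>sym_group n\<^esub> (perm_a p) \<and>
              \<phi> (perm_c n p) = inv\<^bsub>sym_group n\<^esub> (perm_c n p))"
proof
  let ?G = "sym_group n"
  let ?A = "perm_a p" and ?C = "perm_c n p"
  assume "\<exists>\<phi> \<in> iso ?G ?G. \<phi> ?A = inv\<^bsub>?G\<^esub> ?A \<and> \<phi> ?C = inv\<^bsub>?G\<^esub> ?C"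
  then obtain \<phi> where iso: "\<phi> \<in> iso ?G ?G" and fA: "\<phi> ?A = inv\<^bsub>?G\<^esub> ?A"
    and fC: "\<phi> ?C = inv\<^bsub>?G\<^esub> ?C" by blast
  interpret group ?G by (rule sym_group_is_group)
  interpret h: group_hom ?G ?G \<phi>
    using iso by (simp add: group_hom_def group_hom_axioms_def iso_def sym_group_is_group)
  have Ac: "?A \<in> carrier ?G" using A_perm[OF p3 pn] by (simp add: sym_group_carrier)
  have Cc: "?C \<in> carrier ?G" using C_perm[OF p3 pn] by (simp add: sym_group_carrier)
  have Cv: "?C x = (if 1 \<le> x \<and> x < p then x+1 else if x = p then 1
     else if p < x \<and> x < n then x+1 else if x = n then p+1 else x)" for x
    using C_apply[of p n x] p3 pn by simp
  have Av: "?A x = (if x = 1 then p+2 else if x = p+2 then p+1 else if x = p+1 then 1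
     else if x = 2 then p+3 else if x = p+3 then 2 else x)" for x
    using A_apply[of p x] p3 by simp
  have injC: "inj ?C" using C_perm[OF p3 pn] by (rule permutes_inj)
  have injA: "inj ?A" using A_perm[OF p3 pn] by (rule permutes_inj)
  have bijC: "bij ?C" using C_perm[OF p3 pn] by (rule permutes_bij)
  define Ci where "Ci = inv' ?C"
  define Ai where "Ai = inv' ?A"
  have Cic: "Ci \<in> carrier ?G" unfolding Ci_def using Cc by (metis inv_closed sym_group_inv_equality)
  have fA': "\<phi> ?A = Ai" using fA Ac by (simp add: Ai_def)
  have fC': "\<phi> ?C = Ci" using fC Cc by (simp add: Ci_def)
  have fCi: "\<phi> Ci = ?C"
  proof -
    have "\<phi> Ci = \<phi> (inv\<^bsub>?G\<^esub> ?C)" using Cc by (simp add: Ci_def)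
    also have "\<dots> = inv\<^bsub>?G\<^esub> (\<phi> ?C)" by (rule h.hom_inv[OF Cc])
    also have "\<dots> = inv\<^bsub>?G\<^esub> (inv\<^bsub>?G\<^esub> ?C)" using fC by (simp only:)
    also have "\<dots> = ?C" using Cc by (rule inv_inv)
    finally show ?thesis .
  qed
  define u where "u = ?C \<otimes>\<^bsub>?G\<^esub> (?A \<otimes>\<^bsub>?G\<^esub> ?A) \<otimes>\<^bsub>?G\<^esub> Ci"
  define v where "v = (?A \<otimes>\<^bsub>?G\<^esub> ?A \<otimes>\<^bsub>?G\<^esub> ?A \<otimes>\<^bsub>?G\<^esub> ?A) \<otimes>\<^bsub>?G\<^esub> (Ci \<otimes>\<^bsub>?G\<^esub> (?A \<otimes>\<^bsub>?G\<^esub> ?A \<otimes>\<^bsub>?G\<^esub> ?A) \<otimes>\<^bsub>?G\<^esub> ?C)"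
  have A2: "?A \<circ> ?A = cycle_of_list [1, p+1, p+2]"
    using p3 by (auto simp: fun_eq_iff Av transpose_def)
  have A3: "?A \<circ> ?A \<circ> ?A = cycle_of_list [2, p+3]"
    using p3 by (auto simp: fun_eq_iff Av transpose_def)
  have A4: "?A \<circ> ?A \<circ> ?A \<circ> ?A = cycle_of_list [1, p+2, p+1]"
    using p3 by (auto simp: fun_eq_iff Av transpose_def)
  have Ci2: "Ci 2 = 1" unfolding Ci_def by (rule inv_f_eq[OF injC]) (use p3 in \<open>simp add: Cv\<close>)
  have Ci3: "Ci (p+3) = p+2" unfolding Ci_def by (rule inv_f_eq[OF injC]) (use p3 pn in \<open>simp add: Cv\<close>)
  have u_eq: "u = cycle_of_list [2, p+2, p+3]"
  proof -
    have "u = ?C \<circ> cycle_of_list [1, p+1, p+2] \<circ> inv' ?C"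
      unfolding u_def Ci_def by (simp add: sym_group_mult A2)
    also have "\<dots> = cycle_of_list (map ?C [1, p+1, p+2])"
      by (rule conjugation_of_cycle[OF _ bijC]) (use p3 in simp)
    also have "map ?C [1, p+1, p+2] = [2, p+2, p+3]" using p3 pn by (simp add: Cv)
    finally show ?thesis .
  qed
  have v_eq: "v = cycle_of_list [1, p+2, p+1] \<circ> cycle_of_list [1, p+2]"
  proof -
    have bCi: "bij Ci" unfolding Ci_def using bijC by (rule bij_imp_bij_inv)
    have iCi: "inv' Ci = ?C" unfolding Ci_def using bijC by (rule inv_inv_eq)
    have "Ci \<circ> cycle_of_list [2, p+3] \<circ> ?C = Ci \<circ> cycle_of_list [2, p+3] \<circ> inv' Ci"
      using iCi by simp
    also have "\<dots> = cycle_of_list (map Ci [2, p+3])"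
      by (rule conjugation_of_cycle[OF _ bCi]) simp
    also have "\<dots> = cycle_of_list [1, p+2]" using Ci2 Ci3 by simp
    finally have e: "Ci \<circ> cycle_of_list [2, p+3] \<circ> ?C = cycle_of_list [1, p+2]" .
    show ?thesis unfolding v_def using e A3 A4 by (simp add: sym_group_mult comp_assoc)
  qed
  have comm: "u \<otimes>\<^bsub>?G\<^esub> v = v \<otimes>\<^bsub>?G\<^esub> u"
    unfolding u_eq v_eq sym_group_mult using p3 by (auto simp: fun_eq_iff transpose_def)
  have "\<phi> u \<otimes>\<^bsub>?G\<^esub> \<phi> v = \<phi> v \<otimes>\<^bsub>?G\<^esub> \<phi> u"
  proof -
    have uc: "u \<in> carrier ?G" "v \<in> carrier ?G" unfolding u_def v_def using Ac Cc Cic by auto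
    have "\<phi> (u \<otimes>\<^bsub>?G\<^esub> v) = \<phi> (v \<otimes>\<^bsub>?G\<^esub> u)" using comm by simp
    then show ?thesis using uc by simp
  qed
  moreover have "\<phi> u = Ci \<circ> (Ai \<circ> Ai) \<circ> ?C"
    unfolding u_def using Ac Cc Cic by (simp add: fA' fC' fCi) (simp add: sym_group_mult)
  moreover have "\<phi> v = (Ai \<circ> Ai \<circ> Ai \<circ> Ai) \<circ> (?C \<circ> (Ai \<circ> Ai \<circ> Ai) \<circ> Ci)"
    unfolding v_def using Ac Cc Cic by (simp add: fA' fC' fCi) (simp add: sym_group_mult)
  moreover have "Ci 1 = p" unfolding Ci_def by (rule inv_f_eq[OF injC]) (use p3 in \<open>simp add: Cv\<close>)
  moreover have "Ci (p+1) = n" unfolding Ci_def by (rule inv_f_eq[OF injC]) (use p3 pn in \<open>simp add: Cv\<close>)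
  moreover have "Ai p = p" unfolding Ai_def by (rule inv_f_eq[OF injA]) (use p3 in \<open>simp add: Av\<close>)
  moreover have "Ai 1 = p+1" unfolding Ai_def by (rule inv_f_eq[OF injA]) (use p3 in \<open>simp add: Av\<close>)
  moreover have "Ai (p+1) = p+2" unfolding Ai_def by (rule inv_f_eq[OF injA]) (use p3 in \<open>simp add: Av\<close>)
  moreover have "Ai (p+2) = 1" unfolding Ai_def by (rule inv_f_eq[OF injA]) (use p3 in \<open>simp add: Av\<close>)
  moreover have "Ai 2 = p+3" unfolding Ai_def by (rule inv_f_eq[OF injA]) (use p3 in \<open>simp add: Av\<close>)
  moreover have "Ai (p+3) = 2" unfolding Ai_def by (rule inv_f_eq[OF injA]) (use p3 in \<open>simp add: Av\<close>)
  moreover have "?C p = 1" "?C 1 = 2" "?C (p+1) = p+2" using p3 pn by (simp_all add: Cv)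
  ultimately have "n = p + 1"
    using Ci2 by (auto simp: sym_group_mult fun_eq_iff dest: spec[of _ 1])
  then show False using pn by simp
qed


theorem mainTheorem12:
  fixes n p :: nat
  assumes "n \<ge> 7" and "prime p" and "odd p" and "p + 3 \<le> n"
  shows "(\<not> (\<exists>\<phi> \<in> iso (sym_group n) (sym_group n).
              \<phi> (perm_a p) = inv\<^bsub>sym_group n\<^esub> (perm_a p) \<and>
              \<phi> (perm_c n p) = inv\<^bsub>sym_group n\<^esub> (perm_c n p))) \<and>
         generate (sym_group n) {perm_a p, perm_c n p} = carrier (sym_group n)"
proof -
  have "p \<ge> 2" using assms(2) by (rule prime_ge_2_nat)
  moreover have "p \<noteq> 2" using assms(3) by auto
  ultimately have p3: "p \<ge> 3" by simp
  show ?thesis using part1[OF p3 assms(4)] part2[OF p3 assms(4)] by blast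
qed

end
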